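(* Let $(A,R)$ be a relationally complete cartesian discrete combinatory object, with meet $\wedge:A\times A\to A$, top element $\top\in A$, and generic function $@\in R$ (a partial function). Define the partial application $a\cdot b=@(a\wedge b)$ (associating to the left) and $A_\#=\{a\in A\mid\{(\top,a)\}\in R\}$. Then: (i) for every polynomial $p[x_1,\dots,x_n]$ over $(A,\cdot)$ with coefficients in $A_\#$, the partial function $A^n\rightharpoonup A$, $\vec a\mapsto p[\vec a]$, is in $R^{(n)}$; (ii) for all $n\in\mathbb{N}$ and $r\in R^{(n+1)}$ there is $e\in A_\#$ such that for all $a_1,\dots,a_n,b\in A$: $e\cdot a_1\cdots a_n$ is defined, and whenever $r(a_1,\dots,a_n,b)$ is defined, $e\cdot a_1\cdots a_n\cdot b$ is defined and equal to $r(a_1,\dots,a_n,b)$; (iii) $(A,\cdot,A_\#)$ is a weak relative PCA, and the uniform preorder structure on $A$ consisting of all relations contained in some partial function $(e\cdot -):A\rightharpoonup A$ with $e\in A_\#$ is equal to $R$.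
   Context: A uniform preorder is a pair $(A,R)$ with $A$ a set and $R\subseteq P(A\times A)$ such that $\mathrm{id}_A\in R$, $s\circ r\in R$ whenever $r,s\in R$, and $s\in R$ whenever $r\in R$ and $s\subseteq r$; it is a discrete combinatory object (DCO) if every $r\in R$ is single-valued. Monotone maps $f:(A,R)\to(B,S)$: functions with $\{(fa,fa')\mid(a,a')\in r\}\in S$ for $r\in R$, ordered by $f\le g$ iff $\{(fa,ga)\}\in S$; finite 2-products: terminal singleton, product $(A\times B,R\otimes S)$ with $R\otimes S$ the relations contained in some $r\times s$. $(A,R)$ is cartesian if the terminal projection and diagonal have right adjoints $\top:1\to A$ and $\wedge:A\times A\to A$ (adjunction $f\dashv g$: $\mathrm{id}\le gf$, $fg\le\mathrm{id}$). A cartesian $(A,R)$ is relationally complete if there is $@\in R$ such that for every $r\in R$ there is a total function $\tilde r$ with graph in $R$ satisfying: $(a\wedge b,c)\in r$ implies $(\tilde r(a)\wedge b,c)\in @$ for all $a,b,c$. Define $\wedge^{(0)}(\ast)=\top$ and $\wedge^{(n+1)}(\vec a,b)=\wedge^{(n)}(\vec a)\wedge b$, and $R^{(n)}=\{r\subseteq A^n\times A\mid \exists s\in R.\ r=s\circ\wedge^{(n)}\}$. A polynomial over $(A,\cdot)$ is a term built from variables, constants in $A$ and application; $p[\vec a]$ is its possibly undefined value. A weak relative PCA is a triple $(A,\cdot,A_\#)$ with $\cdot:A\times A\rightharpoonup A$ a partial binary operation and $A_\#\subseteq A$ closed under application (whenever defined) and containing elements $\mathsf{k},\mathsf{s}$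 such that for all $a,b,c\in A$: $\mathsf{k}\cdot a\cdot b$ is defined and equals $a$; $\mathsf{s}\cdot a\cdot b$ is defined; and if $a\cdot c\cdot(b\cdot c)$ is defined then $\mathsf{s}\cdot a\cdot b\cdot c$ is defined and equals it. *)

theory Defs
  imports Main
begin

definition uniform_preorder :: "'a set \<Rightarrow> ('a \<times> 'a) set set \<Rightarrow> bool" where
  "uniform_preorder A R \<longleftrightarrow>
     R \<subseteq> Pow (A \<times> A) \<and> Id_on A \<in> R \<and>
     (\<forall>r\<in>R. \<forall>s\<in>R. r O s \<in> R) \<and>
     (\<forall>r\<in>R. \<forall>s. s \<subseteq> r \<longrightarrow> s \<in> R)"

definition DCO :: "'a set \<Rightarrow> ('a \<times> 'a) set set \<Rightarrow> bool" where
  "DCO A R \<longleftrightarrow> uniform_preorder A R \<and> (\<forall>r\<in>R. single_valued r)"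

definition mono_map :: "'a set \<Rightarrow> ('a \<times> 'a) set set \<Rightarrow> 'b set \<Rightarrow> ('b \<times> 'b) set set
    \<Rightarrow> ('a \<Rightarrow> 'b) \<Rightarrow> bool" where
  "mono_map A R B S f \<longleftrightarrow> (\<forall>a\<in>A. f a \<in> B) \<and>
     (\<forall>r\<in>R. {(f a, f a') | a a'. (a, a') \<in> r} \<in> S)"

definition map_le :: "'a set \<Rightarrow> ('b \<times> 'b) set set \<Rightarrow> ('a \<Rightarrow> 'b) \<Rightarrow> ('a \<Rightarrow> 'b) \<Rightarrow> bool" where
  "map_le A S f g \<longleftrightarrow> {(f a, g a) | a. a \<in> A} \<in> S"

definition adjunction :: "'a set \<Rightarrow> ('a \<times> 'a) set set \<Rightarrow> 'b set \<Rightarrow> ('b \<times> 'b) set set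
    \<Rightarrow> ('a \<Rightarrow> 'b) \<Rightarrow> ('b \<Rightarrow> 'a) \<Rightarrow> bool" where
  "adjunction A R B S f g \<longleftrightarrow> mono_map A R B S f \<and> mono_map B S A R g \<and>
     map_le A R id (g \<circ> f) \<and> map_le B S (f \<circ> g) id"

definition terminal_R :: "(unit \<times> unit) set set" where
  "terminal_R = Pow UNIV"

definition relprod :: "('a \<times> 'a) set \<Rightarrow> ('b \<times> 'b) set \<Rightarrow> (('a \<times> 'b) \<times> ('a \<times> 'b)) set" where
  "relprod r s = {((a, b), (a', b')) | a b a' b'. (a, a') \<in> r \<and> (b, b') \<in> s}"

definition tensor :: "('a \<times> 'a) set set \<Rightarrow> ('b \<times> 'b) set set \<Rightarrow> (('a \<times> 'b) \<times> ('a \<times> 'b)) set set" where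
  "tensor R S = {t. \<exists>r\<in>R. \<exists>s\<in>S. t \<subseteq> relprod r s}"

text \<open>Cartesian: the terminal projection has right adjoint \<tp> (an element tp),
  and the diagonal has right adjoint the meet.\<close>
definition cartesian :: "'a set \<Rightarrow> ('a \<times> 'a) set set \<Rightarrow> 'a \<Rightarrow> ('a \<Rightarrow> 'a \<Rightarrow> 'a) \<Rightarrow> bool" where
  "cartesian A R tp meet \<longleftrightarrow>
     adjunction A R (UNIV :: unit set) terminal_R (\<lambda>_. ()) (\<lambda>_. tp) \<and>
     adjunction A R (A \<times> A) (tensor R R) (\<lambda>a. (a, a)) (\<lambda>(a, b). meet a b)"

definition rel_complete_with ::
    "'a set \<Rightarrow> ('a \<times> 'a) set set \<Rightarrow> ('a \<Rightarrow> 'a \<Rightarrow> 'a) \<Rightarrow> ('a \<times> 'a) set \<Rightarrow> bool" where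
  "rel_complete_with A R meet app \<longleftrightarrow> app \<in> R \<and>
     (\<forall>r\<in>R. \<exists>rt. (\<forall>a\<in>A. rt a \<in> A) \<and> {(a, rt a) | a. a \<in> A} \<in> R \<and>
        (\<forall>a\<in>A. \<forall>b\<in>A. \<forall>c\<in>A. (meet a b, c) \<in> r \<longrightarrow> (meet (rt a) b, c) \<in> app))"

text \<open>Elements of A^n are lists of length n over A;
  \<open>meet_n [] = tp\<close>, \<open>meet_n (as @ [b]) = meet (meet_n as) b\<close>.\<close>
definition meet_n :: "'a \<Rightarrow> ('a \<Rightarrow> 'a \<Rightarrow> 'a) \<Rightarrow> 'a list \<Rightarrow> 'a" where
  "meet_n tp meet xs = foldl meet tp xs"

definition Rn :: "'a set \<Rightarrow> ('a \<times> 'a) set set \<Rightarrow> 'a \<Rightarrow> ('a \<Rightarrow> 'a \<Rightarrow> 'a) \<Rightarrow> nat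
    \<Rightarrow> ('a list \<times> 'a) set set" where
  "Rn A R tp meet n = {r. \<exists>s\<in>R.
     r = {(v, c). v \<in> lists A \<and> length v = n \<and> (meet_n tp meet v, c) \<in> s}}"

text \<open>a \<cdot> b = @(a \<and> b), as a partial function (app is single-valued).\<close>
definition pap :: "('a \<Rightarrow> 'a \<Rightarrow> 'a) \<Rightarrow> ('a \<times> 'a) set \<Rightarrow> 'a \<Rightarrow> 'a \<Rightarrow> 'a option" where
  "pap meet app a b =
     (if \<exists>c. (meet a b, c) \<in> app then Some (THE c. (meet a b, c) \<in> app) else None)"

definition sharp :: "'a set \<Rightarrow> ('a \<times> 'a) set set \<Rightarrow> 'a \<Rightarrow> 'a set" where
  "sharp A R tp = {a \<in> A. {(tp, a)} \<in> R}"

fun apps :: "('a \<Rightarrow> 'a \<Rightarrow> 'a option) \<Rightarrow> 'a \<Rightarrow> 'a list \<Rightarrow> 'a option" where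
  "apps ap e [] = Some e"
| "apps ap e (a # as) = Option.bind (ap e a) (\<lambda>x. apps ap x as)"

text \<open>Polynomials: variables x_i (indexed from 0), constants, application.\<close>
datatype 'a pterm = Var nat | Const 'a | App "'a pterm" "'a pterm"

fun peval :: "('a \<Rightarrow> 'a \<Rightarrow> 'a option) \<Rightarrow> 'a list \<Rightarrow> 'a pterm \<Rightarrow> 'a option" where
  "peval ap v (Var i) = Some (v ! i)"
| "peval ap v (Const c) = Some c"
| "peval ap v (App p q) = Option.bind (peval ap v p) (\<lambda>x. Option.bind (peval ap v q) (\<lambda>y. ap x y))"

fun pvars :: "'a pterm \<Rightarrow> nat set" where
  "pvars (Var i) = {i}"
| "pvars (Const c) = {}"
| "pvars (App p q) = pvars p \<union> pvars q"

fun pconsts :: "'a pterm \<Rightarrow> 'a set" where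
  "pconsts (Var i) = {}"
| "pconsts (Const c) = {c}"
| "pconsts (App p q) = pconsts p \<union> pconsts q"

definition weak_rpca :: "'a set \<Rightarrow> ('a \<Rightarrow> 'a \<Rightarrow> 'a option) \<Rightarrow> 'a set \<Rightarrow> bool" where
  "weak_rpca A ap Ash \<longleftrightarrow>
     (\<forall>a\<in>A. \<forall>b\<in>A. \<forall>c. ap a b = Some c \<longrightarrow> c \<in> A) \<and>
     Ash \<subseteq> A \<and>
     (\<forall>a\<in>Ash. \<forall>b\<in>Ash. \<forall>c. ap a b = Some c \<longrightarrow> c \<in> Ash) \<and>
     (\<exists>k\<in>Ash. \<exists>s\<in>Ash. \<forall>a\<in>A. \<forall>b\<in>A. \<forall>c\<in>A.
        apps ap k [a, b] = Some a \<and>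
        apps ap s [a, b] \<noteq> None \<and>
        (\<forall>d. Option.bind (ap a c) (\<lambda>x. Option.bind (ap b c) (\<lambda>y. ap x y)) = Some d
              \<longrightarrow> apps ap s [a, b, c] = Some d))"

end

theory Submission
  imports Defs
begin

lemma apps_snoc: "apps ap e (xs @ [y]) = Option.bind (apps ap e xs) (\<lambda>x. ap x y)"
  by (induction xs arbitrary: e) (auto split: Option.bind_split)

lemma relprod_iff[simp]: "((a,b),(a',b')) \<in> relprod r s \<longleftrightarrow> (a,a') \<in> r \<and> (b,b') \<in> s"
  by (auto simp: relprod_def)

lemma meet_n_Nil: "meet_n tp meet [] = tp" by (simp add: meet_n_def)
lemma meet_n_snoc: "meet_n tp meet (xs @ [x]) = meet (meet_n tp meet xs) x"
  by (simp add: meet_n_def)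

context
  fixes A :: "'a set" and R :: "('a \<times> 'a) set set"
    and tp :: 'a and meet :: "'a \<Rightarrow> 'a \<Rightarrow> 'a" and app :: "('a \<times> 'a) set"
  assumes dco: "DCO A R"
    and cart: "cartesian A R tp meet"
    and rc: "rel_complete_with A R meet app"
begin

lemma RA: "r \<in> R \<Longrightarrow> r \<subseteq> A \<times> A" using dco unfolding DCO_def uniform_preorder_def by auto
lemma Rsub: "r \<in> R \<Longrightarrow> s \<subseteq> r \<Longrightarrow> s \<in> R" using dco unfolding DCO_def uniform_preorder_def by auto
lemma Rcomp: "r \<in> R \<Longrightarrow> s \<in> R \<Longrightarrow> r O s \<in> R" using dco unfolding DCO_def uniform_preorder_def by auto
lemma Rsv: "r \<in> R \<Longrightarrow> single_valued r" using dco unfolding DCO_def by auto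

lemma tpA: "tp \<in> A" using cart unfolding cartesian_def adjunction_def mono_map_def by auto
lemma constR: "{(a, tp) | a. a \<in> A} \<in> R"
  using cart unfolding cartesian_def adjunction_def map_le_def by auto
lemma meetA: "a \<in> A \<Longrightarrow> b \<in> A \<Longrightarrow> meet a b \<in> A"
  using cart unfolding cartesian_def adjunction_def mono_map_def by auto
lemma diagR: "{(a, meet a a) | a. a \<in> A} \<in> R"
  using cart unfolding cartesian_def adjunction_def map_le_def by auto

lemma prodR:
  assumes "r \<in> R" "s \<in> R"
  shows "{(meet a b, meet a' b') | a b a' b'. (a,a') \<in> r \<and> (b,b') \<in> s} \<in> R"
proof -
  have m: "\<forall>t\<in>tensor R R. {((\<lambda>(a, b). meet a b) p, (\<lambda>(a, b). meet a b) p') | p p'. (p, p') \<in> t} \<in> R"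
    using cart unfolding cartesian_def adjunction_def mono_map_def by auto
  have "relprod r s \<in> tensor R R" using assms unfolding tensor_def by auto
  with m have "{((\<lambda>(a, b). meet a b) p, (\<lambda>(a, b). meet a b) p') | p p'. (p, p') \<in> relprod r s} \<in> R" by auto
  moreover have "{(meet a b, meet a' b') | a b a' b'. (a,a') \<in> r \<and> (b,b') \<in> s}
     \<subseteq> {((\<lambda>(a, b). meet a b) p, (\<lambda>(a, b). meet a b) p') | p p'. (p, p') \<in> relprod r s}"
    unfolding relprod_def by fastforce
  ultimately show ?thesis using Rsub by blast
qed

lemma projR: "{(meet a b, a) | a b. a \<in> A \<and> b \<in> A} \<in> R \<and> {(meet a b, b) | a b. a \<in> A \<and> b \<in> A} \<in> R"
proof -
  have adj: "adjunction A R (A \<times> A) (tensor R R) (\<lambda>a. (a, a)) (\<lambda>(a, b). meet a b)"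
    using cart unfolding cartesian_def by (rule conjunct2)
  have "map_le (A \<times> A) (tensor R R) ((\<lambda>a. (a, a)) \<circ> (\<lambda>(a, b). meet a b)) id"
    using adj unfolding adjunction_def by (elim conjE)
  then have m: "{(((\<lambda>a. (a, a)) \<circ> (\<lambda>(a, b). meet a b)) p, id p) | p. p \<in> A \<times> A} \<in> tensor R R"
    unfolding map_le_def .
  have "{(((\<lambda>a. (a, a)) \<circ> (\<lambda>(a, b). meet a b)) p, id p) | p. p \<in> A \<times> A}
     = {((meet a b, meet a b), (a, b)) | a b. a \<in> A \<and> b \<in> A}"
  proof (rule set_eqI, rule iffI)
    fix x assume "x \<in> {(((\<lambda>a. (a, a)) \<circ> (\<lambda>(a, b). meet a b)) p, id p) | p. p \<in> A \<times> A}"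
    then obtain a b where "x = ((meet a b, meet a b), (a, b))" "a \<in> A" "b \<in> A" by auto
    then show "x \<in> {((meet a b, meet a b), (a, b)) | a b. a \<in> A \<and> b \<in> A}" by blast
  next
    fix x assume "x \<in> {((meet a b, meet a b), (a, b)) | a b. a \<in> A \<and> b \<in> A}"
    then obtain a b where "x = ((meet a b, meet a b), (a, b))" "a \<in> A" "b \<in> A" by auto
    then show "x \<in> {(((\<lambda>a. (a, a)) \<circ> (\<lambda>(a, b). meet a b)) p, id p) | p. p \<in> A \<times> A}"
      by (intro CollectI exI[of _ "(a,b)"]) simp
  qed
  with m have "{((meet a b, meet a b), (a, b)) | a b. a \<in> A \<and> b \<in> A} \<in> tensor R R" by simp
  then obtain r s where rs: "r \<in> R" "s \<in> R"
    "{((meet a b, meet a b), (a, b)) | a b. a \<in> A \<and> b \<in> A} \<subseteq> relprod r s"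
    unfolding tensor_def by auto
  have "(meet a b, a) \<in> r \<and> (meet a b, b) \<in> s" if "a \<in> A" "b \<in> A" for a b
  proof -
    have "((meet a b, meet a b), (a, b)) \<in> {((meet a b, meet a b), (a, b)) | a b. a \<in> A \<and> b \<in> A}"
      using that by blast
    then have "((meet a b, meet a b), (a, b)) \<in> relprod r s" by (rule subsetD[OF rs(3)])
    then show ?thesis by simp
  qed
  then have h1: "{(meet a b, a) | a b. a \<in> A \<and> b \<in> A} \<subseteq> r"
    and h2: "{(meet a b, b) | a b. a \<in> A \<and> b \<in> A} \<subseteq> s"
    by auto
  show ?thesis using Rsub[OF rs(1) h1] Rsub[OF rs(2) h2] by (rule conjI)
qed

lemma meet_inj: "a \<in> A \<Longrightarrow> b \<in> A \<Longrightarrow> a' \<in> A \<Longrightarrow> b' \<in> A \<Longrightarrow> meet a b = meet a' b' \<Longrightarrow> a = a' \<and> b = b'"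
proof -
  assume h: "a \<in> A" "b \<in> A" "a' \<in> A" "b' \<in> A" "meet a b = meet a' b'"
  have s1: "single_valued {(meet a b, a) | a b. a \<in> A \<and> b \<in> A}"
   and s2: "single_valued {(meet a b, b) | a b. a \<in> A \<and> b \<in> A}" using projR Rsv by blast+
  have m1: "(meet a b, a) \<in> {(meet a b, a) | a b. a \<in> A \<and> b \<in> A}" using h by blast
  have m2: "(meet a b, a') \<in> {(meet a b, a) | a b. a \<in> A \<and> b \<in> A}" using h by auto
  have m3: "(meet a b, b) \<in> {(meet a b, b) | a b. a \<in> A \<and> b \<in> A}" using h by blast
  have m4: "(meet a b, b') \<in> {(meet a b, b) | a b. a \<in> A \<and> b \<in> A}" using h by auto
  show ?thesis using single_valuedD[OF s1 m1 m2] single_valuedD[OF s2 m3 m4] by simp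
qed

lemma pairR:
  assumes "r \<in> R" "s \<in> R"
  shows "{(x, meet y z) | x y z. (x,y) \<in> r \<and> (x,z) \<in> s} \<in> R"
proof -
  have "{(x, meet y z) | x y z. (x,y) \<in> r \<and> (x,z) \<in> s} \<subseteq>
     {(a, meet a a) | a. a \<in> A} O {(meet a b, meet a' b') | a b a' b'. (a,a') \<in> r \<and> (b,b') \<in> s}"
  proof (rule subsetI)
    fix p assume "p \<in> {(x, meet y z) | x y z. (x,y) \<in> r \<and> (x,z) \<in> s}"
    then obtain x y z where p: "p = (x, meet y z)" "(x,y) \<in> r" "(x,z) \<in> s" by blast
    have xA: "x \<in> A" using RA[OF assms(1)] p(2) by blast
    have 1: "(x, meet x x) \<in> {(a, meet a a) | a. a \<in> A}" using xA by blast
    have 2: "(meet x x, meet y z) \<in> {(meet a b, meet a' b') | a b a' b'. (a,a') \<in> r \<and> (b,b') \<in> s}"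
      using p by blast
    show "p \<in> {(a, meet a a) | a. a \<in> A} O {(meet a b, meet a' b') | a b a' b'. (a,a') \<in> r \<and> (b,b') \<in> s}"
      unfolding p(1) by (rule relcompI[OF 1 2])
  qed
  then show ?thesis by (rule Rsub[OF Rcomp[OF diagR prodR[OF assms]]])
qed

lemma appR: "app \<in> R" using rc unfolding rel_complete_with_def by auto

lemma rcE: "r \<in> R \<Longrightarrow> \<exists>rt. (\<forall>a\<in>A. rt a \<in> A) \<and> {(a, rt a) | a. a \<in> A} \<in> R \<and>
        (\<forall>a\<in>A. \<forall>b\<in>A. \<forall>c\<in>A. (meet a b, c) \<in> r \<longrightarrow> (meet (rt a) b, c) \<in> app)"
  using rc unfolding rel_complete_with_def by auto

lemma pap_Some: "(meet a b, c) \<in> app \<Longrightarrow> pap meet app a b = Some c"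
proof -
  assume h: "(meet a b, c) \<in> app"
  have sv: "single_valued app" using appR Rsv by blast
  have "(THE c. (meet a b, c) \<in> app) = c"
    using h single_valuedD[OF sv] by (intro the_equality) auto
  then show ?thesis using h unfolding pap_def by auto
qed

lemma pap_SomeD: "pap meet app a b = Some c \<Longrightarrow> (meet a b, c) \<in> app"
proof -
  assume h: "pap meet app a b = Some c"
  then obtain c' where c': "(meet a b, c') \<in> app" unfolding pap_def by (auto split: if_splits)
  then have "pap meet app a b = Some c'" by (rule pap_Some)
  with h c' show ?thesis by simp
qed

lemma meet_nA: "v \<in> lists A \<Longrightarrow> meet_n tp meet v \<in> A"
proof (induction v rule: rev_induct)
  case Nil then show ?case by (simp add: meet_n_Nil tpA)
next
  case (snoc x xs) then show ?case by (simp add: meet_n_snoc meetA)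
qed

lemma meet_n_inj: "v \<in> lists A \<Longrightarrow> w \<in> lists A \<Longrightarrow> length v = length w \<Longrightarrow>
    meet_n tp meet v = meet_n tp meet w \<Longrightarrow> v = w"
proof (induction v arbitrary: w rule: rev_induct)
  case Nil then show ?case by simp
next
  case (snoc x xs)
  from snoc.prems(3) obtain ys y where w: "w = ys @ [y]" by (cases w rule: rev_exhaust) auto
  have A1: "xs \<in> lists A" "x \<in> A" "ys \<in> lists A" "y \<in> A" using snoc.prems w by auto
  have "meet (meet_n tp meet xs) x = meet (meet_n tp meet ys) y"
    using snoc.prems(4) w by (simp add: meet_n_snoc)
  then have "meet_n tp meet xs = meet_n tp meet ys \<and> x = y"
    using meet_inj[OF meet_nA[OF A1(1)] A1(2) meet_nA[OF A1(3)] A1(4)] by blast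
  moreover have "length xs = length ys" using snoc.prems(3) w by simp
  ultimately show ?case using snoc.IH[OF A1(1) A1(3)] w by simp
qed

lemma sharp_tp: "tp \<in> sharp A R tp"
proof -
  have "{(tp, tp)} \<subseteq> {(a, tp) | a. a \<in> A}" using tpA by blast
  then show ?thesis unfolding sharp_def using Rsub[OF constR] tpA by blast
qed

lemma sharp_rt: "e \<in> sharp A R tp \<Longrightarrow> {(a, rt a) | a. a \<in> A} \<in> R \<Longrightarrow> rt e \<in> sharp A R tp"
proof -
  assume e: "e \<in> sharp A R tp" and g: "{(a, rt a) | a. a \<in> A} \<in> R"
  have eA: "e \<in> A" "{(tp, e)} \<in> R" using e unfolding sharp_def by auto
  have "{(tp, rt e)} \<subseteq> {(tp, e)} O {(a, rt a) | a. a \<in> A}" using eA by blast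
  then have "{(tp, rt e)} \<in> R" by (rule Rsub[OF Rcomp[OF eA(2) g]])
  moreover then have "rt e \<in> A" using RA by blast
  ultimately show ?thesis unfolding sharp_def by blast
qed

lemma constE: "e \<in> sharp A R tp \<Longrightarrow> {(x, e) | x. x \<in> A} \<in> R"
proof -
  assume e: "e \<in> sharp A R tp"
  have eA: "{(tp, e)} \<in> R" using e unfolding sharp_def by auto
  have "{(x, e) | x. x \<in> A} \<subseteq> {(a, tp) | a. a \<in> A} O {(tp, e)}" by blast
  then show ?thesis by (rule Rsub[OF Rcomp[OF constR eA]])
qed

lemma varR: "i < n \<Longrightarrow> {(meet_n tp meet v, v ! i) | v. v \<in> lists A \<and> length v = n} \<in> R"
proof (induction n arbitrary: i)
  case 0 then show ?case by simp
next
  case (Suc n)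
  define P1 where "P1 = {(meet a b, a) | a b. a \<in> A \<and> b \<in> A}"
  define P2 where "P2 = {(meet a b, b) | a b. a \<in> A \<and> b \<in> A}"
  have P: "P1 \<in> R" "P2 \<in> R" using projR unfolding P1_def P2_def by auto
  show ?case
  proof (cases "i = n")
    case True
    have "{(meet_n tp meet v, v ! i) | v. v \<in> lists A \<and> length v = Suc n} \<subseteq> P2"
    proof (rule subsetI)
      fix p assume "p \<in> {(meet_n tp meet v, v ! i) | v. v \<in> lists A \<and> length v = Suc n}"
      then obtain v where v: "p = (meet_n tp meet v, v ! i)" "v \<in> lists A" "length v = Suc n" by blast
      then obtain w x where w: "v = w @ [x]" by (cases v rule: rev_exhaust) auto
      have "w \<in> lists A" "x \<in> A" "length w = n" using v w by auto
      then show "p \<in> P2" unfolding P2_def v(1) w using True meet_nA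
        by (auto simp: meet_n_snoc nth_append)
    qed
    then show ?thesis using Rsub[OF P(2)] by blast
  next
    case False
    then have i: "i < n" using Suc.prems by simp
    have "{(meet_n tp meet v, v ! i) | v. v \<in> lists A \<and> length v = Suc n} \<subseteq>
        P1 O {(meet_n tp meet v, v ! i) | v. v \<in> lists A \<and> length v = n}"
    proof (rule subsetI)
      fix p assume "p \<in> {(meet_n tp meet v, v ! i) | v. v \<in> lists A \<and> length v = Suc n}"
      then obtain v where v: "p = (meet_n tp meet v, v ! i)" "v \<in> lists A" "length v = Suc n" by blast
      then obtain w x where w: "v = w @ [x]" by (cases v rule: rev_exhaust) auto
      have wx: "w \<in> lists A" "x \<in> A" "length w = n" using v w by auto
      have 1: "(meet_n tp meet v, meet_n tp meet w) \<in> P1"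
        unfolding P1_def w using wx meet_nA by (auto simp: meet_n_snoc)
      have 2: "(meet_n tp meet w, v ! i) \<in> {(meet_n tp meet v, v ! i) | v. v \<in> lists A \<and> length v = n}"
        using wx i unfolding w by (auto simp: nth_append)
      show "p \<in> P1 O {(meet_n tp meet v, v ! i) | v. v \<in> lists A \<and> length v = n}"
        unfolding v(1) by (rule relcompI[OF 1 2])
    qed
    then show ?thesis by (rule Rsub[OF Rcomp[OF P(1) Suc.IH[OF i]]])
  qed
qed

lemma polyR: "pvars p \<subseteq> {..<n} \<Longrightarrow> pconsts p \<subseteq> sharp A R tp \<Longrightarrow>
   {(meet_n tp meet v, c) | v c. v \<in> lists A \<and> length v = n \<and> peval (pap meet app) v p = Some c} \<in> R"
proof (induction p)
  case (Var i)
  then have i: "i < n" by simp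
  have "{(meet_n tp meet v, c) | v c. v \<in> lists A \<and> length v = n \<and> peval (pap meet app) v (Var i) = Some c}
     = {(meet_n tp meet v, v ! i) | v. v \<in> lists A \<and> length v = n}" by auto
  then show ?case using varR[OF i] by simp
next
  case (Const e)
  then have e: "e \<in> sharp A R tp" by simp
  have "{(meet_n tp meet v, c) | v c. v \<in> lists A \<and> length v = n \<and> peval (pap meet app) v (Const e) = Some c}
     \<subseteq> {(x, e) | x. x \<in> A}" using meet_nA by auto
  then show ?case by (rule Rsub[OF constE[OF e]])
next
  case (App p q)
  define Sp where "Sp = {(meet_n tp meet v, c) | v c. v \<in> lists A \<and> length v = n \<and> peval (pap meet app) v p = Some c}"
  define Sq where "Sq = {(meet_n tp meet v, c) | v c. v \<in> lists A \<and> length v = n \<and> peval (pap meet app) v q = Some c}"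
  have Sp: "Sp \<in> R" unfolding Sp_def using App by simp
  have Sq: "Sq \<in> R" unfolding Sq_def using App by simp
  have "{(meet_n tp meet v, c) | v c. v \<in> lists A \<and> length v = n \<and> peval (pap meet app) v (App p q) = Some c}
     \<subseteq> {(x, meet y z) | x y z. (x,y) \<in> Sp \<and> (x,z) \<in> Sq} O app"
  proof (rule subsetI)
    fix u assume "u \<in> {(meet_n tp meet v, c) | v c. v \<in> lists A \<and> length v = n \<and> peval (pap meet app) v (App p q) = Some c}"
    then obtain v c where v: "u = (meet_n tp meet v, c)" "v \<in> lists A" "length v = n"
      "peval (pap meet app) v (App p q) = Some c" by blast
    then obtain y z where yz: "peval (pap meet app) v p = Some y" "peval (pap meet app) v q = Some z"
      "pap meet app y z = Some c" by (auto split: Option.bind_splits)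
    have 1: "(meet_n tp meet v, meet y z) \<in> {(x, meet y z) | x y z. (x,y) \<in> Sp \<and> (x,z) \<in> Sq}"
      unfolding Sp_def Sq_def using v yz by blast
    have 2: "(meet y z, c) \<in> app" using pap_SomeD[OF yz(3)] .
    show "u \<in> {(x, meet y z) | x y z. (x,y) \<in> Sp \<and> (x,z) \<in> Sq} O app"
      unfolding v(1) by (rule relcompI[OF 1 2])
  qed
  then show ?case by (rule Rsub[OF Rcomp[OF pairR[OF Sp Sq] appR]])
qed

lemma part1: "pvars p \<subseteq> {..<n} \<Longrightarrow> pconsts p \<subseteq> sharp A R tp \<Longrightarrow>
   {(v, c). v \<in> lists A \<and> length v = n \<and> peval (pap meet app) v p = Some c} \<in> Rn A R tp meet n"
proof -
  assume a: "pvars p \<subseteq> {..<n}" "pconsts p \<subseteq> sharp A R tp"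
  define S where "S = {(meet_n tp meet v, c) | v c. v \<in> lists A \<and> length v = n \<and> peval (pap meet app) v p = Some c}"
  have S: "S \<in> R" unfolding S_def using polyR[OF a] .
  have "{(v, c). v \<in> lists A \<and> length v = n \<and> peval (pap meet app) v p = Some c}
      = {(v, c). v \<in> lists A \<and> length v = n \<and> (meet_n tp meet v, c) \<in> S}"
  proof (rule set_eqI, rule iffI)
    fix u assume "u \<in> {(v, c). v \<in> lists A \<and> length v = n \<and> peval (pap meet app) v p = Some c}"
    then show "u \<in> {(v, c). v \<in> lists A \<and> length v = n \<and> (meet_n tp meet v, c) \<in> S}"
      unfolding S_def by blast
  next
    fix u assume "u \<in> {(v, c). v \<in> lists A \<and> length v = n \<and> (meet_n tp meet v, c) \<in> S}"
    then obtain v c where u: "u = (v, c)" "v \<in> lists A" "length v = n" "(meet_n tp meet v, c) \<in> S" by blast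
    then obtain w where w: "meet_n tp meet v = meet_n tp meet w" "w \<in> lists A" "length w = n"
      "peval (pap meet app) w p = Some c" unfolding S_def by blast
    have "v = w" using meet_n_inj[OF u(2) w(2)] u(3) w by simp
    then show "u \<in> {(v, c). v \<in> lists A \<and> length v = n \<and> peval (pap meet app) v p = Some c}"
      using u w by simp
  qed
  then show ?thesis unfolding Rn_def using S by blast
qed

lemma part2_aux: "\<forall>s\<in>R. \<exists>e\<in>sharp A R tp. \<forall>as\<in>lists A. \<forall>b\<in>A. length as = n \<longrightarrow>
    apps (pap meet app) e as \<noteq> None \<and>
    (\<forall>c. (meet (meet_n tp meet as) b, c) \<in> s \<longrightarrow> apps (pap meet app) e (as @ [b]) = Some c)"
proof (induction n)
  case 0
  show ?case
  proof
    fix s assume s: "s \<in> R"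
    obtain rt where rt: "\<forall>a\<in>A. rt a \<in> A" "{(a, rt a) | a. a \<in> A} \<in> R"
      "\<forall>a\<in>A. \<forall>b\<in>A. \<forall>c\<in>A. (meet a b, c) \<in> s \<longrightarrow> (meet (rt a) b, c) \<in> app"
      using rcE[OF s] by blast
    have "\<forall>as\<in>lists A. \<forall>b\<in>A. length as = 0 \<longrightarrow>
      apps (pap meet app) (rt tp) as \<noteq> None \<and>
      (\<forall>c. (meet (meet_n tp meet as) b, c) \<in> s \<longrightarrow> apps (pap meet app) (rt tp) (as @ [b]) = Some c)"
    proof (intro ballI impI conjI allI)
      fix as b c assume h: "as \<in> lists A" "b \<in> A" "length as = 0" "(meet (meet_n tp meet as) b, c) \<in> s"
      have cA: "c \<in> A" using RA[OF s] h(4) by blast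
      have "(meet (rt tp) b, c) \<in> app" using rt(3) tpA h cA by (simp add: meet_n_Nil)
      then show "apps (pap meet app) (rt tp) (as @ [b]) = Some c" using h(3) pap_Some by simp
    qed simp
    then show "\<exists>e\<in>sharp A R tp. \<forall>as\<in>lists A. \<forall>b\<in>A. length as = 0 \<longrightarrow>
      apps (pap meet app) e as \<noteq> None \<and>
      (\<forall>c. (meet (meet_n tp meet as) b, c) \<in> s \<longrightarrow> apps (pap meet app) e (as @ [b]) = Some c)"
      using sharp_rt[OF sharp_tp rt(2)] by blast
  qed
next
  case (Suc n)
  show ?case
  proof
    fix s assume s: "s \<in> R"
    obtain rt where rt: "\<forall>a\<in>A. rt a \<in> A" "{(a, rt a) | a. a \<in> A} \<in> R"
      "\<forall>a\<in>A. \<forall>b\<in>A. \<forall>c\<in>A. (meet a b, c) \<in> s \<longrightarrow> (meet (rt a) b, c) \<in> app"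
      using rcE[OF s] by blast
    obtain e where e: "e \<in> sharp A R tp" and eP: "\<forall>as\<in>lists A. \<forall>b\<in>A. length as = n \<longrightarrow>
      apps (pap meet app) e as \<noteq> None \<and>
      (\<forall>c. (meet (meet_n tp meet as) b, c) \<in> {(a, rt a) | a. a \<in> A} \<longrightarrow> apps (pap meet app) e (as @ [b]) = Some c)"
      using Suc.IH rt(2) by blast
    have key: "apps (pap meet app) e as = Some (rt (meet_n tp meet as))"
      if asm: "as \<in> lists A" "length as = Suc n" for as
    proof -
      obtain ws x where w: "as = ws @ [x]" using asm(2) by (cases as rule: rev_exhaust) auto
      have wx: "ws \<in> lists A" "x \<in> A" "length ws = n" using asm w by auto
      have "(meet (meet_n tp meet ws) x, rt (meet (meet_n tp meet ws) x)) \<in> {(a, rt a) | a. a \<in> A}"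
        using meetA[OF meet_nA[OF wx(1)] wx(2)] by blast
      then show ?thesis using eP wx unfolding w by (simp add: meet_n_snoc)
    qed
    have "\<forall>as\<in>lists A. \<forall>b\<in>A. length as = Suc n \<longrightarrow>
      apps (pap meet app) e as \<noteq> None \<and>
      (\<forall>c. (meet (meet_n tp meet as) b, c) \<in> s \<longrightarrow> apps (pap meet app) e (as @ [b]) = Some c)"
    proof (intro ballI impI conjI allI)
      fix as b assume h: "as \<in> lists A" "b \<in> A" "length as = Suc n"
      show "apps (pap meet app) e as \<noteq> None" using key[OF h(1) h(3)] by simp
      fix c assume hc: "(meet (meet_n tp meet as) b, c) \<in> s"
      have cA: "c \<in> A" using RA[OF s] hc by blast
      have "(meet (rt (meet_n tp meet as)) b, c) \<in> app" using rt(3) meet_nA[OF h(1)] h(2) cA hc by blast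
      then show "apps (pap meet app) e (as @ [b]) = Some c"
        using key[OF h(1) h(3)] pap_Some by (simp add: apps_snoc)
    qed
    then show "\<exists>e\<in>sharp A R tp. \<forall>as\<in>lists A. \<forall>b\<in>A. length as = Suc n \<longrightarrow>
      apps (pap meet app) e as \<noteq> None \<and>
      (\<forall>c. (meet (meet_n tp meet as) b, c) \<in> s \<longrightarrow> apps (pap meet app) e (as @ [b]) = Some c)"
      using e by blast
  qed
qed

lemma part2: "r \<in> Rn A R tp meet (Suc n) \<Longrightarrow> \<exists>e \<in> sharp A R tp.
        \<forall>as \<in> lists A. \<forall>b \<in> A. length as = n \<longrightarrow>
          apps (pap meet app) e as \<noteq> None \<and>
          (\<forall>c. (as @ [b], c) \<in> r \<longrightarrow> apps (pap meet app) e (as @ [b]) = Some c)"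
proof -
  assume "r \<in> Rn A R tp meet (Suc n)"
  then have "\<exists>s\<in>R. r = {(v, c). v \<in> lists A \<and> length v = Suc n \<and> (meet_n tp meet v, c) \<in> s}"
    unfolding Rn_def by (rule CollectD)
  then obtain s where s: "s \<in> R"
    and r: "r = {(v, c). v \<in> lists A \<and> length v = Suc n \<and> (meet_n tp meet v, c) \<in> s}"
    by (rule bexE)
  have "\<exists>e\<in>sharp A R tp. \<forall>as\<in>lists A. \<forall>b\<in>A. length as = n \<longrightarrow>
    apps (pap meet app) e as \<noteq> None \<and>
    (\<forall>c. (meet (meet_n tp meet as) b, c) \<in> s \<longrightarrow> apps (pap meet app) e (as @ [b]) = Some c)"
    by (rule bspec[OF part2_aux s])
  then obtain e where e: "e \<in> sharp A R tp" and eP: "\<forall>as\<in>lists A. \<forall>b\<in>A. length as = n \<longrightarrow>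
    apps (pap meet app) e as \<noteq> None \<and>
    (\<forall>c. (meet (meet_n tp meet as) b, c) \<in> s \<longrightarrow> apps (pap meet app) e (as @ [b]) = Some c)"
    by (rule bexE)
  have "\<forall>as \<in> lists A. \<forall>b \<in> A. length as = n \<longrightarrow>
          apps (pap meet app) e as \<noteq> None \<and>
          (\<forall>c. (as @ [b], c) \<in> r \<longrightarrow> apps (pap meet app) e (as @ [b]) = Some c)"
  proof (intro ballI impI conjI allI)
    fix as b assume h: "as \<in> lists A" "b \<in> A" "length as = n"
    note E = eP[rule_format, OF h(1) h(2) h(3)]
    show "apps (pap meet app) e as \<noteq> None" using E by (rule conjunct1)
    fix c assume "(as @ [b], c) \<in> r"
    then have "(meet (meet_n tp meet as) b, c) \<in> s" unfolding r by (simp add: meet_n_snoc)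
    then show "apps (pap meet app) e (as @ [b]) = Some c" using E by simp
  qed
  then show ?thesis using e by (rule bexI)
qed

lemma combK: "\<exists>k\<in>sharp A R tp. \<forall>a\<in>A. \<forall>b\<in>A. apps (pap meet app) k [a, b] = Some a"
proof -
  have "{(v, c). v \<in> lists A \<and> length v = Suc (Suc 0) \<and> peval (pap meet app) v (Var 0) = Some c}
     \<in> Rn A R tp meet (Suc (Suc 0))"
    by (rule part1) auto
  from part2[OF this] obtain e where e: "e \<in> sharp A R tp" and
    eP: "\<forall>as \<in> lists A. \<forall>b \<in> A. length as = Suc 0 \<longrightarrow>
          apps (pap meet app) e as \<noteq> None \<and>
          (\<forall>c. (as @ [b], c) \<in> {(v, c). v \<in> lists A \<and> length v = Suc (Suc 0) \<and> peval (pap meet app) v (Var 0) = Some c}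
             \<longrightarrow> apps (pap meet app) e (as @ [b]) = Some c)" by blast
  have "\<forall>a\<in>A. \<forall>b\<in>A. apps (pap meet app) e [a, b] = Some a"
  proof (intro ballI)
    fix a b assume h: "a \<in> A" "b \<in> A"
    have "[a] \<in> lists A" "length [a] = Suc 0" using h by auto
    then have "\<forall>c. ([a] @ [b], c) \<in> {(v, c). v \<in> lists A \<and> length v = Suc (Suc 0) \<and> peval (pap meet app) v (Var 0) = Some c}
             \<longrightarrow> apps (pap meet app) e ([a] @ [b]) = Some c" using eP h(2) by blast
    moreover have "([a] @ [b], a) \<in> {(v, c). v \<in> lists A \<and> length v = Suc (Suc 0) \<and> peval (pap meet app) v (Var 0) = Some c}"
      using h by simp
    ultimately show "apps (pap meet app) e [a, b] = Some a" by simp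
  qed
  then show ?thesis using e by blast
qed

definition Sterm :: "'b pterm" where
  "Sterm = App (App (Var 0) (Var 2)) (App (Var 1) (Var 2))"

lemma combS: "\<exists>s\<in>sharp A R tp. \<forall>a\<in>A. \<forall>b\<in>A. \<forall>c\<in>A.
        apps (pap meet app) s [a, b] \<noteq> None \<and>
        (\<forall>d. Option.bind (pap meet app a c) (\<lambda>x. Option.bind (pap meet app b c) (\<lambda>y. pap meet app x y)) = Some d
              \<longrightarrow> apps (pap meet app) s [a, b, c] = Some d)"
proof -
  have "{(v, c). v \<in> lists A \<and> length v = Suc (Suc (Suc 0)) \<and> peval (pap meet app) v Sterm = Some c}
     \<in> Rn A R tp meet (Suc (Suc (Suc 0)))"
    by (rule part1) (auto simp: Sterm_def)
  from part2[OF this] obtain e where e: "e \<in> sharp A R tp" and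
    eP: "\<forall>as \<in> lists A. \<forall>b \<in> A. length as = Suc (Suc 0) \<longrightarrow>
          apps (pap meet app) e as \<noteq> None \<and>
          (\<forall>c. (as @ [b], c) \<in> {(v, c). v \<in> lists A \<and> length v = Suc (Suc (Suc 0)) \<and> peval (pap meet app) v Sterm = Some c}
             \<longrightarrow> apps (pap meet app) e (as @ [b]) = Some c)" by blast
  have "\<forall>a\<in>A. \<forall>b\<in>A. \<forall>c\<in>A.
        apps (pap meet app) e [a, b] \<noteq> None \<and>
        (\<forall>d. Option.bind (pap meet app a c) (\<lambda>x. Option.bind (pap meet app b c) (\<lambda>y. pap meet app x y)) = Some d
              \<longrightarrow> apps (pap meet app) e [a, b, c] = Some d)"
  proof (intro ballI conjI allI impI)
    fix a b c assume h: "a \<in> A" "b \<in> A" "c \<in> A"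
    have l: "[a, b] \<in> lists A" "length [a, b] = Suc (Suc 0)" using h by auto
    show "apps (pap meet app) e [a, b] \<noteq> None" using eP l h(3) by blast
    fix d assume hd: "Option.bind (pap meet app a c) (\<lambda>x. Option.bind (pap meet app b c) (\<lambda>y. pap meet app x y)) = Some d"
    have "\<forall>d. ([a, b] @ [c], d) \<in> {(v, c). v \<in> lists A \<and> length v = Suc (Suc (Suc 0)) \<and> peval (pap meet app) v Sterm = Some c}
             \<longrightarrow> apps (pap meet app) e ([a, b] @ [c]) = Some d" using eP l h(3) by blast
    moreover have "([a, b] @ [c], d) \<in> {(v, c). v \<in> lists A \<and> length v = Suc (Suc (Suc 0)) \<and> peval (pap meet app) v Sterm = Some c}"
      using h hd by (simp add: Sterm_def)
    ultimately show "apps (pap meet app) e [a, b, c] = Some d" by simp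
  qed
  then show ?thesis using e by blast
qed

lemma part3: "weak_rpca A (pap meet app) (sharp A R tp)"
proof -
  have c1: "\<forall>a\<in>A. \<forall>b\<in>A. \<forall>c. pap meet app a b = Some c \<longrightarrow> c \<in> A"
  proof (intro ballI allI impI)
    fix a b c assume "pap meet app a b = Some c"
    then have "(meet a b, c) \<in> app" by (rule pap_SomeD)
    then show "c \<in> A" using RA[OF appR] by blast
  qed
  have c2: "sharp A R tp \<subseteq> A" unfolding sharp_def by blast
  have c3: "\<forall>a\<in>sharp A R tp. \<forall>b\<in>sharp A R tp. \<forall>c. pap meet app a b = Some c \<longrightarrow> c \<in> sharp A R tp"
  proof (intro ballI allI impI)
    fix a b c assume a: "a \<in> sharp A R tp" and b: "b \<in> sharp A R tp" and h: "pap meet app a b = Some c"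
    have ra: "{(tp, a)} \<in> R" and rb: "{(tp, b)} \<in> R" using a b unfolding sharp_def by auto
    have ab: "(meet a b, c) \<in> app" using h by (rule pap_SomeD)
    have "{(tp, c)} \<subseteq> {(x, meet y z) | x y z. (x,y) \<in> {(tp, a)} \<and> (x,z) \<in> {(tp, b)}} O app"
      using ab by blast
    then have "{(tp, c)} \<in> R" by (rule Rsub[OF Rcomp[OF pairR[OF ra rb] appR]])
    moreover then have "c \<in> A" using RA by blast
    ultimately show "c \<in> sharp A R tp" unfolding sharp_def by blast
  qed
  obtain k where k: "k \<in> sharp A R tp" "\<forall>a\<in>A. \<forall>b\<in>A. apps (pap meet app) k [a, b] = Some a"
    using combK by (rule bexE)
  obtain s where s: "s \<in> sharp A R tp" "\<forall>a\<in>A. \<forall>b\<in>A. \<forall>c\<in>A.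
        apps (pap meet app) s [a, b] \<noteq> None \<and>
        (\<forall>d. Option.bind (pap meet app a c) (\<lambda>x. Option.bind (pap meet app b c) (\<lambda>y. pap meet app x y)) = Some d
              \<longrightarrow> apps (pap meet app) s [a, b, c] = Some d)"
    using combS by (rule bexE)
  have ks: "\<forall>a\<in>A. \<forall>b\<in>A. \<forall>c\<in>A. apps (pap meet app) k [a, b] = Some a \<and>
        apps (pap meet app) s [a, b] \<noteq> None \<and>
        (\<forall>d. Option.bind (pap meet app a c) (\<lambda>x. Option.bind (pap meet app b c) (\<lambda>y. pap meet app x y)) = Some d
              \<longrightarrow> apps (pap meet app) s [a, b, c] = Some d)"
  proof (intro ballI)
    fix a b c assume h: "a \<in> A" "b \<in> A" "c \<in> A"
    show "apps (pap meet app) k [a, b] = Some a \<and>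
        apps (pap meet app) s [a, b] \<noteq> None \<and>
        (\<forall>d. Option.bind (pap meet app a c) (\<lambda>x. Option.bind (pap meet app b c) (\<lambda>y. pap meet app x y)) = Some d
              \<longrightarrow> apps (pap meet app) s [a, b, c] = Some d)"
      by (rule conjI[OF bspec[OF bspec[OF k(2) h(1)] h(2)] bspec[OF bspec[OF bspec[OF s(2) h(1)] h(2)] h(3)]])
  qed
  show ?thesis unfolding weak_rpca_def
    apply (rule conjI[OF c1 conjI[OF c2 conjI[OF c3]]])
    apply (rule bexI[where x=k])
     apply (rule bexI[where x=s])
      apply (rule ks)
     apply (rule s(1))
    apply (rule k(1))
    done
qed

lemma IdR: "Id_on A \<in> R" using dco unfolding DCO_def uniform_preorder_def by blast

lemma part4: "{r. \<exists>e \<in> sharp A R tp. r \<subseteq> {(a, c). a \<in> A \<and> pap meet app e a = Some c}} = R"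
proof (rule set_eqI, rule iffI)
  fix r assume "r \<in> {r. \<exists>e \<in> sharp A R tp. r \<subseteq> {(a, c). a \<in> A \<and> pap meet app e a = Some c}}"
  then obtain e where e: "e \<in> sharp A R tp" and r: "r \<subseteq> {(a, c). a \<in> A \<and> pap meet app e a = Some c}" by blast
  have "r \<subseteq> {(x, meet y z) | x y z. (x,y) \<in> {(x, e) | x. x \<in> A} \<and> (x,z) \<in> Id_on A} O app"
  proof (rule subsetI)
    fix p assume "p \<in> r"
    then obtain a c where p: "p = (a, c)" "a \<in> A" "pap meet app e a = Some c" using r by blast
    have 1: "(a, meet e a) \<in> {(x, meet y z) | x y z. (x,y) \<in> {(x, e) | x. x \<in> A} \<and> (x,z) \<in> Id_on A}"
      using p(2) by blast
    have 2: "(meet e a, c) \<in> app" using p(3) by (rule pap_SomeD)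
    show "p \<in> {(x, meet y z) | x y z. (x,y) \<in> {(x, e) | x. x \<in> A} \<and> (x,z) \<in> Id_on A} O app"
      unfolding p(1) by (rule relcompI[OF 1 2])
  qed
  then show "r \<in> R" by (rule Rsub[OF Rcomp[OF pairR[OF constE[OF e] IdR] appR]])
next
  fix r assume r: "r \<in> R"
  define P2 where "P2 = {(meet a b, b) | a b. a \<in> A \<and> b \<in> A}"
  have P2: "P2 \<in> R" using projR unfolding P2_def by auto
  obtain rt where rt: "\<forall>a\<in>A. rt a \<in> A" "{(a, rt a) | a. a \<in> A} \<in> R"
      "\<forall>a\<in>A. \<forall>b\<in>A. \<forall>c\<in>A. (meet a b, c) \<in> P2 O r \<longrightarrow> (meet (rt a) b, c) \<in> app"
      using rcE[OF Rcomp[OF P2 r]] by blast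
  have "r \<subseteq> {(a, c). a \<in> A \<and> pap meet app (rt tp) a = Some c}"
  proof (rule subsetI)
    fix p assume p: "p \<in> r"
    then obtain b c where bc: "p = (b, c)" by (cases p) auto
    have A2: "b \<in> A" "c \<in> A" using RA[OF r] p bc by auto
    have "(meet tp b, b) \<in> P2" unfolding P2_def using A2 tpA by blast
    then have "(meet tp b, c) \<in> P2 O r" using p bc by blast
    then have "(meet (rt tp) b, c) \<in> app" using rt(3) tpA A2 by blast
    then show "p \<in> {(a, c). a \<in> A \<and> pap meet app (rt tp) a = Some c}"
      using bc A2 pap_Some by simp
  qed
  then show "r \<in> {r. \<exists>e \<in> sharp A R tp. r \<subseteq> {(a, c). a \<in> A \<and> pap meet app e a = Some c}}"
    using sharp_rt[OF sharp_tp rt(2)] by blast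
qed

end

theorem proposition9p4:
  fixes A :: "'a set" and R :: "('a \<times> 'a) set set"
    and tp :: 'a and meet :: "'a \<Rightarrow> 'a \<Rightarrow> 'a" and app :: "('a \<times> 'a) set"
  assumes dco: "DCO A R"
    and cart: "cartesian A R tp meet"
    and rc: "rel_complete_with A R meet app"
  shows
    "(\<forall>n (p :: 'a pterm). pvars p \<subseteq> {..<n} \<and> pconsts p \<subseteq> sharp A R tp \<longrightarrow>
        {(v, c). v \<in> lists A \<and> length v = n \<and> peval (pap meet app) v p = Some c}
          \<in> Rn A R tp meet n)
   \<and> (\<forall>n. \<forall>r \<in> Rn A R tp meet (Suc n). \<exists>e \<in> sharp A R tp.
        \<forall>as \<in> lists A. \<forall>b \<in> A. length as = n \<longrightarrow>
          apps (pap meet app) e as \<noteq> None \<and>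
          (\<forall>c. (as @ [b], c) \<in> r \<longrightarrow> apps (pap meet app) e (as @ [b]) = Some c))
   \<and> weak_rpca A (pap meet app) (sharp A R tp)
   \<and> {r. \<exists>e \<in> sharp A R tp. r \<subseteq> {(a, c). a \<in> A \<and> pap meet app e a = Some c}} = R"
  using part1[OF dco cart rc] part2[OF dco cart rc] part3[OF dco cart rc] part4[OF dco cart rc]
  by blast

end
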